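(* Let $D,\widetilde D,K,\widetilde K$ be nonempty sets, $\emptyset\ne F\subseteq\mathcal{F}(D,K)$, $\emptyset\ne\widetilde F\subseteq\mathcal{F}(\widetilde D,\widetilde K)$, and let $\Gamma:F\to\widetilde F$ be a mapping for which there exist $\kappa,m^*\in\mathbb{N}$ and mappings $\eta_j:\widetilde D\to D$ ($j=0,\dots,\kappa-1$), $\beta:K\to\mathbb{Z}[0,2^{m^*})$, $\rho:\widetilde D\times\mathbb{Z}[0,2^{m^*})^\kappa\to\widetilde K$ such that for all $f\in F$, $s\in\widetilde D$, $$(\Gamma(f))(s)=\rho\big(s,\beta(f(\eta_0(s))),\dots,\beta(f(\eta_{\kappa-1}(s)))\big).$$ Then for each quantum query $\widetilde Q$ on $\widetilde F$ there is a quantum algorithm without measurement $B$ on $F$ such that $n_q(B)=2\kappa$, $m:=m(B)>\widetilde m:=m(\widetilde Q)$, and for all $f\in F$ and $x\in\mathbb{Z}[0,2^{\widetilde m})$, $$(\widetilde Q_{\Gamma(f)}|x\rangle)|0\rangle_{m-\widetilde m}=B_f|x\rangle|0\rangle_{m-\widetilde m},$$ where $|0\rangle_{m-\widetilde m}$ is the zero basis state of the last $m-\widetilde m$ qubits (so $H_m=H_{\widetilde m}\otimes H_{m-\widetilde m}$).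
   Context: For nonempty sets $D',K'$, $\mathcal{F}(D',K')$ is the set of all functions $D'\to K'$; $\mathbb{Z}[0,N)=\{0,\dots,N-1\}$. $H_m=(\mathbb{C}^2)^{\otimes m}$ has canonical basis $|i\rangle$, $i\in\mathbb{Z}[0,2^m)$, where $|i\rangle=e_{j_0}\otimes\cdots\otimes e_{j_{m-1}}$ with $i=\sum_k j_k2^{m-1-k}$. For nonempty $F\subseteq\mathcal{F}(D',K')$, a quantum query on $F$ is a tuple $Q=(m,m',m'',Z,\tau,\beta)$ with $m,m',m''\in\mathbb{N}$, $m'+m''\le m$, $\emptyset\ne Z\subseteq\mathbb{Z}[0,2^{m'})$, $\tau:Z\to D'$, $\beta:K'\to\mathbb{Z}[0,2^{m''})$; $m(Q)=m$. For $f\in F$, $Q_f$ is the unitary on $H_m=H_{m'}\otimes H_{m''}\otimes H_{m-m'-m''}$ with $Q_f|i\rangle|x\rangle|y\rangle=|i\rangle|x\oplus\beta(f(\tau(i)))\rangle|y\rangle$ if $i\in Z$ and $=|i\rangle|x\rangle|y\rangle$ otherwise ($\oplus$ = addition mod $2^{m''}$). A quantum algorithm on $F$ with no measurement is $B=(Q,(U_j)_{j=0}^n)$, $n\in\mathbb{N}_0$, $Q$ a quantum query on $F$, $U_j$ unitary operators on $H_{m(Q)}$; $B_f=U_nQ_fU_{n-1}\cdots U_1Q_fU_0$, $n_q(B)=n$ (number of queries), $m(B)=m(Q)$. *)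

theory Defs
  imports "Jordan_Normal_Form.Schur_Decomposition" "HOL-Library.FuncSet"
begin

text \<open>The space H_m is modelled as complex vectors of dimension 2^m; operators as
  2^m x 2^m complex matrices. The canonical basis vector |i> is unit_vec (2^m) i.\<close>

definition ket :: "nat \<Rightarrow> nat \<Rightarrow> complex vec" where
  "ket N i = unit_vec N i"

definition unitary_mat :: "nat \<Rightarrow> complex mat \<Rightarrow> bool" where
  "unitary_mat N U \<longleftrightarrow> U \<in> carrier_mat N N \<and> mat_adjoint U * U = 1\<^sub>m N \<and> U * mat_adjoint U = 1\<^sub>m N"

text \<open>pad k v = v tensor |0>_k (zero basis state on k extra trailing qubits):
  the basis index of |i>|j> is i * 2^k + j.\<close>
definition pad :: "nat \<Rightarrow> complex vec \<Rightarrow> complex vec" where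
  "pad k v = vec (dim_vec v * 2 ^ k) (\<lambda>n. if n mod 2 ^ k = 0 then v $ (n div 2 ^ k) else 0)"

type_synonym ('d, 'k) qquery = "nat \<times> nat \<times> nat \<times> nat set \<times> (nat \<Rightarrow> 'd) \<times> ('k \<Rightarrow> nat)"

definition is_query :: "'d set \<Rightarrow> 'k set \<Rightarrow> ('d, 'k) qquery \<Rightarrow> bool" where
  "is_query D' K' Q = (case Q of (m, m1, m2, Z, \<tau>, \<beta>) \<Rightarrow>
      m \<ge> 1 \<and> m1 \<ge> 1 \<and> m2 \<ge> 1 \<and> m1 + m2 \<le> m \<and> Z \<noteq> {} \<and> Z \<subseteq> {..<2 ^ m1}
      \<and> \<tau> \<in> Z \<rightarrow> D' \<and> \<beta> \<in> K' \<rightarrow> {..<2 ^ m2})"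

definition m_query :: "('d, 'k) qquery \<Rightarrow> nat" where
  "m_query Q = fst Q"

text \<open>Permutation of basis indices realised by Q_f:
  |i>|x>|y> maps to |i>|x + beta(f(tau i)) mod 2^m''>|y> if i in Z.\<close>
definition query_perm :: "('d, 'k) qquery \<Rightarrow> ('d \<Rightarrow> 'k) \<Rightarrow> nat \<Rightarrow> nat" where
  "query_perm Q f n = (case Q of (m, m1, m2, Z, \<tau>, \<beta>) \<Rightarrow>
      (let r = m - m1 - m2; i = n div 2 ^ (m - m1); x = (n div 2 ^ r) mod 2 ^ m2; y = n mod 2 ^ r
       in if i \<in> Z then i * 2 ^ (m - m1) + ((x + \<beta> (f (\<tau> i))) mod 2 ^ m2) * 2 ^ r + y else n))"

definition query_mat :: "('d, 'k) qquery \<Rightarrow> ('d \<Rightarrow> 'k) \<Rightarrow> complex mat" where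
  "query_mat Q f = mat (2 ^ m_query Q) (2 ^ m_query Q)
      (\<lambda>(a, b). if a = query_perm Q f b then 1 else 0)"

type_synonym ('d, 'k) qalg = "('d, 'k) qquery \<times> complex mat list"

definition is_alg :: "'d set \<Rightarrow> 'k set \<Rightarrow> ('d, 'k) qalg \<Rightarrow> bool" where
  "is_alg D' K' B = (is_query D' K' (fst B) \<and> snd B \<noteq> []
      \<and> (\<forall>U \<in> set (snd B). unitary_mat (2 ^ m_query (fst B)) U))"

definition n_q :: "('d, 'k) qalg \<Rightarrow> nat" where
  "n_q B = length (snd B) - 1"

definition m_alg :: "('d, 'k) qalg \<Rightarrow> nat" where
  "m_alg B = m_query (fst B)"

text \<open>B_f = U_n Q_f U_{n-1} ... U_1 Q_f U_0.\<close>
definition alg_mat :: "('d, 'k) qalg \<Rightarrow> ('d \<Rightarrow> 'k) \<Rightarrow> complex mat" where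
  "alg_mat B f = foldl (\<lambda>A U. U * query_mat (fst B) f * A) (hd (snd B)) (tl (snd B))"

end

theory Submission
  imports Defs
begin


definition perm_mat :: "nat \<Rightarrow> (nat \<Rightarrow> nat) \<Rightarrow> complex mat" where
  "perm_mat N p = mat N N (\<lambda>(a, b). if a = p b then 1 else 0)"

lemma perm_mat_dims[simp]: "dim_row (perm_mat N p) = N" "dim_col (perm_mat N p) = N"
  "perm_mat N p \<in> carrier_mat N N"
  by (auto simp: perm_mat_def)

lemma perm_mat_index[simp]: "a < N \<Longrightarrow> b < N \<Longrightarrow> perm_mat N p $$ (a,b) = (if a = p b then 1 else 0)"
  by (simp add: perm_mat_def)

lemma perm_mat_mult:
  assumes q: "\<And>n. n < N \<Longrightarrow> q n < N"
  shows "perm_mat N p * perm_mat N q = perm_mat N (p \<circ> q)"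
proof (rule eq_matI)
  fix a c assume a: "a < dim_row (perm_mat N (p \<circ> q))" and c: "c < dim_col (perm_mat N (p \<circ> q))"
  hence aN: "a < N" and cN: "c < N" by auto
  have "(perm_mat N p * perm_mat N q) $$ (a, c) = (\<Sum>b\<in>{0..<N}. (if a = p b then 1 else 0) * (if b = q c then (1::complex) else 0))"
    using aN cN by (simp add: scalar_prod_def)
  also have "\<dots> = (\<Sum>b\<in>{0..<N}. if b = q c then (if a = p (q c) then 1 else 0) else 0)"
    by (rule sum.cong) auto
  also have "\<dots> = (if a = p (q c) then 1 else 0)" using q[OF cN] by (simp add: sum.delta)
  finally show "(perm_mat N p * perm_mat N q) $$ (a, c) = perm_mat N (p \<circ> q) $$ (a, c)"
    using aN cN by simp
qed auto

lemma perm_mat_vec: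
  assumes "n < N" "p n < N"
  shows "perm_mat N p *\<^sub>v unit_vec N n = unit_vec N (p n)"
proof (rule eq_vecI)
  fix a assume "a < dim_vec (unit_vec N (p n))"
  hence aN: "a < N" by simp
  have "(perm_mat N p *\<^sub>v unit_vec N n) $ a = (\<Sum>b\<in>{0..<N}. (if a = p b then 1 else 0) * (if b = n then (1::complex) else 0))"
    using aN assms by (simp add: scalar_prod_def)
  also have "\<dots> = (\<Sum>b\<in>{0..<N}. if b = n then (if a = p n then 1 else 0) else 0)"
    by (rule sum.cong) auto
  also have "\<dots> = (if a = p n then 1 else 0)" using assms by (simp add: sum.delta)
  finally show "(perm_mat N p *\<^sub>v unit_vec N n) $ a = unit_vec N (p n) $ a"
    using aN assms by simp
qed auto

lemma adjoint_index: "i < dim_col A \<Longrightarrow> j < dim_row A \<Longrightarrow> mat_adjoint A $$ (i,j) = conjugate (A $$ (j,i))"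
  "dim_row (mat_adjoint A) = dim_col A" "dim_col (mat_adjoint A) = dim_row A"
  by (auto simp: mat_adjoint_def mat_of_rows_index)

lemma perm_mat_unitary:
  assumes q: "\<And>n. n < N \<Longrightarrow> p n < N" and inj: "inj_on p {..<N}"
  shows "unitary_mat N (perm_mat N p)"
proof -
  have surj: "p ` {..<N} = {..<N}" using q inj by (intro endo_inj_surj) auto
  have A: "mat_adjoint (perm_mat N p) * perm_mat N p = 1\<^sub>m N"
  proof (rule eq_matI)
    fix a c assume "a < dim_row (1\<^sub>m N :: complex mat)" "c < dim_col (1\<^sub>m N :: complex mat)"
    hence aN: "a < N" and cN: "c < N" by auto
    have "(mat_adjoint (perm_mat N p) * perm_mat N p) $$ (a,c) = (\<Sum>b\<in>{0..<N}. (if b = p a then 1 else 0) * (if b = p c then (1::complex) else 0))"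
      using aN cN by (simp add: scalar_prod_def adjoint_index, intro sum.cong, auto)
    also have "\<dots> = (\<Sum>b\<in>{0..<N}. if b = p c then (if p a = p c then 1 else 0) else 0)"
      by (rule sum.cong) auto
    also have "\<dots> = (if p a = p c then 1 else 0)" using q[OF cN] by (simp add: sum.delta)
    also have "\<dots> = (if a = c then 1 else 0)" using inj aN cN by (auto dest: inj_onD)
    finally show "(mat_adjoint (perm_mat N p) * perm_mat N p) $$ (a,c) = 1\<^sub>m N $$ (a,c)" using aN cN by simp
  qed (auto simp: adjoint_index)
  have B: "perm_mat N p * mat_adjoint (perm_mat N p) = 1\<^sub>m N"
  proof (rule eq_matI)
    fix a c assume "a < dim_row (1\<^sub>m N :: complex mat)" "c < dim_col (1\<^sub>m N :: complex mat)"
    hence aN: "a < N" and cN: "c < N" by auto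
    obtain b0 where b0: "b0 < N" "p b0 = a" using surj aN by (metis imageE lessThan_iff)
    have "(perm_mat N p * mat_adjoint (perm_mat N p)) $$ (a,c) = (\<Sum>b\<in>{0..<N}. (if a = p b then 1 else 0) * (if c = p b then (1::complex) else 0))"
      using aN cN by (simp add: scalar_prod_def adjoint_index, intro sum.cong, auto)
    also have "\<dots> = (\<Sum>b\<in>{0..<N}. if b = b0 then (if a = c then 1 else 0) else 0)"
      apply (rule sum.cong, simp)
      using b0 inj by (auto dest: inj_onD)
    also have "\<dots> = (if a = c then 1 else 0)" using b0 by (simp add: sum.delta)
    finally show "(perm_mat N p * mat_adjoint (perm_mat N p)) $$ (a,c) = 1\<^sub>m N $$ (a,c)" using aN cN by simp
  qed (auto simp: adjoint_index)
  show ?thesis unfolding unitary_mat_def using A B by simp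
qed



lemma fields3:
  fixes i xx y M2 R :: nat
  assumes "xx < M2" "y < R"
  shows "(i*(M2*R) + xx*R + y) div (M2*R) = i"
    and "((i*(M2*R) + xx*R + y) div R) mod M2 = xx"
    and "(i*(M2*R) + xx*R + y) mod R = y"
proof -
  have e: "i*(M2*R) + xx*R + y = (i*M2 + xx)*R + y" by (simp add: algebra_simps)
  have d: "(i*(M2*R) + xx*R + y) div R = i*M2 + xx" unfolding e using assms by simp
  show "((i*(M2*R) + xx*R + y) div R) mod M2 = xx" unfolding d using assms by simp
  show "(i*(M2*R) + xx*R + y) mod R = y" unfolding e using assms by simp
  show "(i*(M2*R) + xx*R + y) div (M2*R) = i"
    by (metis d assms(1) div_mult2_eq mult.commute add.commute div_mult_self2 div_less
        add_0 less_nat_zero_code)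
qed

lemma fields3_split:
  fixes n M2 R :: nat
  assumes "M2 > 0" "R > 0"
  shows "n = (n div (M2*R))*(M2*R) + ((n div R) mod M2)*R + n mod R"
proof -
  have "n div (M2*R) = (n div R) div M2" by (metis div_mult2_eq mult.commute)
  hence "(n div (M2*R))*(M2*R) + ((n div R) mod M2)*R = (n div R)*R"
    by (metis add_mult_distrib mult.assoc mult.commute div_mult_mod_eq)
  thus ?thesis by (metis div_mult_mod_eq)
qed

lemma add_mod_cancel_nat: "((A::nat) + c) mod M = (B + c) mod M \<Longrightarrow> A < M \<Longrightarrow> B < M \<Longrightarrow> A = B"
proof -
  assume h: "(A + c) mod M = (B + c) mod M" "A < M" "B < M"
  have "A mod M = B mod M" using h(1) unfolding mod_eq_iff_dvd_symdiff_nat by simp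
  thus ?thesis using h by simp
qed

context
  fixes m m1 m2 :: nat and Z :: "nat set" and \<tau> :: "nat \<Rightarrow> 'd" and \<beta> :: "'k \<Rightarrow> nat"
  assumes mm: "m1 + m2 \<le> m"
begin

lemma pow_split: "(2::nat) ^ (m - m1) = 2 ^ m2 * 2 ^ (m - m1 - m2)"
  using mm by (simp flip: power_add)

lemma qp_unfold:
  "query_perm (m, m1, m2, Z, \<tau>, \<beta>) g n =
   (let R = 2 ^ (m - m1 - m2); M2 = 2 ^ m2; i = n div (M2*R); xx = (n div R) mod M2; y = n mod R in
    if i \<in> Z then i*(M2*R) + ((xx + \<beta> (g (\<tau> i))) mod M2) * R + y else n)"
  unfolding query_perm_def Let_def prod.case pow_split by (rule refl)

lemma qp_index: "query_perm (m, m1, m2, Z, \<tau>, \<beta>) g n div 2^(m - m1) = n div 2^(m - m1)"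
  unfolding qp_unfold Let_def pow_split by (simp add: fields3)

lemma qp_bound:
  assumes "n < 2^m"
  shows "query_perm (m, m1, m2, Z, \<tau>, \<beta>) g n < 2^m"
proof -
  define R :: nat where "R = 2 ^ (m - m1 - m2)"
  define M2 :: nat where "M2 = 2 ^ m2"
  define i where "i = n div (M2*R)"
  have MR: "M2 * R = 2^(m-m1)" unfolding R_def M2_def pow_split ..
  have i: "i < 2^m1" unfolding i_def MR using assms mm
    by (simp add: less_mult_imp_div_less flip: power_add)
  have "i*(M2*R) + X*R + y < 2^m" if "X < M2" "y < R" for X y
  proof -
    have "X*R + y < M2*R"
      by (metis that add.commute add_less_cancel_left less_imp_le_nat mult_Suc
          mult_le_mono1 order_less_le_trans Suc_leI)
    hence "i*(M2*R) + X*R + y < (i+1)*(M2*R)" by simp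
    also have "\<dots> \<le> 2^m1 * (M2*R)" using i by (intro mult_le_mono1) simp
    also have "\<dots> = 2^m" unfolding MR using mm by (simp flip: power_add)
    finally show ?thesis .
  qed
  thus ?thesis using assms unfolding qp_unfold Let_def R_def[symmetric] M2_def[symmetric] i_def[symmetric]
    by (simp add: M2_def R_def)
qed

lemma qp_inj: "inj_on (query_perm (m, m1, m2, Z, \<tau>, \<beta>) g) {..<2^m}"
proof (rule inj_onI)
  fix a b assume a: "a \<in> {..<2^m}" and b: "b \<in> {..<2^m}"
    and eq: "query_perm (m, m1, m2, Z, \<tau>, \<beta>) g a = query_perm (m, m1, m2, Z, \<tau>, \<beta>) g b"
  define R :: nat where "R = 2 ^ (m - m1 - m2)"
  define M2 :: nat where "M2 = 2 ^ m2"
  have R0: "R > 0" and M0: "M2 > 0" by (auto simp: R_def M2_def)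
  have MR: "M2 * R = 2^(m-m1)" unfolding R_def M2_def pow_split ..
  have ia: "a div (M2*R) = b div (M2*R)" using qp_index[of g a] qp_index[of g b] eq MR by simp
  show "a = b"
  proof (cases "a div (M2*R) \<in> Z")
    case False
    thus ?thesis using eq ia unfolding qp_unfold Let_def R_def[symmetric] M2_def[symmetric] by simp
  next
    case True
    define i where "i = a div (M2*R)"
    define c where "c = \<beta> (g (\<tau> i))"
    have eq2: "i*(M2*R) + (((a div R) mod M2 + c) mod M2) * R + a mod R
             = i*(M2*R) + (((b div R) mod M2 + c) mod M2) * R + b mod R"
      using eq True ia unfolding qp_unfold Let_def R_def[symmetric] M2_def[symmetric] i_def c_def
      by simp
    have y: "a mod R = b mod R" using fields3(3)[of _ M2 _ R i] eq2 R0 M0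
      by (metis mod_less_divisor)
    have x: "((a div R) mod M2 + c) mod M2 = ((b div R) mod M2 + c) mod M2"
      using fields3(2)[of _ M2 _ R i] eq2 R0 M0 by (metis mod_less_divisor)
    have x2: "(a div R) mod M2 = (b div R) mod M2"
      using add_mod_cancel_nat[OF x] M0 by simp
    show ?thesis using fields3_split[OF M0 R0, of a] fields3_split[OF M0 R0, of b] ia x2 y by metis
  qed
qed

lemma qp_cong:
  assumes "\<And>i. i \<in> Z \<Longrightarrow> g (\<tau> i) = g' (\<tau> i)"
  shows "query_perm (m, m1, m2, Z, \<tau>, \<beta>) g n = query_perm (m, m1, m2, Z, \<tau>, \<beta>) g' n"
  unfolding query_perm_def Let_def using assms by auto

end



definition rotf :: "nat \<Rightarrow> nat \<Rightarrow> nat \<Rightarrow> nat" where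
  "rotf A B b = (b mod A) * B + b div A"

lemma rotf_bound: "A > 0 \<Longrightarrow> B > 0 \<Longrightarrow> b < A * B \<Longrightarrow> rotf A B b < A * B"
proof -
  assume A: "A > 0" and B: "B > 0" and b: "b < A * B"
  have "b div A < B" using b by (simp add: less_mult_imp_div_less mult.commute)
  moreover have "b mod A < A" using A by simp
  ultimately have "(b mod A) * B + b div A < (b mod A) * B + B" by simp
  also have "\<dots> = (b mod A + 1) * B" by simp
  also have "\<dots> \<le> A * B" using \<open>b mod A < A\<close> by (intro mult_le_mono1) simp
  finally show ?thesis unfolding rotf_def .
qed

lemma rotf_inv: "A > 0 \<Longrightarrow> B > 0 \<Longrightarrow> b < A * B \<Longrightarrow> rotf B A (rotf A B b) = b"
proof -
  assume A: "A > 0" and B: "B > 0" and b: "b < A * B"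
  have d: "b div A < B" using b by (simp add: less_mult_imp_div_less mult.commute)
  have "rotf A B b mod B = b div A" unfolding rotf_def using d by simp
  moreover have "rotf A B b div B = b mod A" unfolding rotf_def using d B by simp
  ultimately show ?thesis unfolding rotf_def by (metis add.commute div_mult_mod_eq mult.commute)
qed

lemma rotf_inj: "A > 0 \<Longrightarrow> B > 0 \<Longrightarrow> inj_on (rotf A B) {..<A*B}"
  by (rule inj_on_inverseI[where g = "rotf B A"]) (auto simp: rotf_inv)

lemma rotf_small: "A > 0 \<Longrightarrow> b < A \<Longrightarrow> rotf A B b = b * B"
  unfolding rotf_def by simp

definition negf :: "nat \<Rightarrow> nat \<Rightarrow> nat" where
  "negf P b = (P - b) mod P"

lemma negf_bound: "P > 0 \<Longrightarrow> negf P b < P" unfolding negf_def by simp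

lemma negf_negf: "b < P \<Longrightarrow> negf P (negf P b) = b"
  unfolding negf_def
  by (cases "b = 0") (auto simp: mod_if)

lemma negf_inj: "inj_on (negf P) {..<P}"
  by (rule inj_on_inverseI[where g = "negf P"]) (auto simp: negf_negf)

lemma negf_0[simp]: "negf P 0 = 0" unfolding negf_def by simp

lemma negf_add: "b < P \<Longrightarrow> v \<le> b \<Longrightarrow> (negf P b + v) mod P = negf P (b - v)"
proof -
  assume b: "b < P" and v: "v \<le> b"
  have "(negf P b + v) mod P = (P - b + v) mod P" unfolding negf_def by (simp add: mod_add_left_eq)
  also have "P - b + v = P - (b - v)" using b v by simp
  finally show ?thesis unfolding negf_def .
qed

definition swf :: "nat \<Rightarrow> nat \<Rightarrow> nat \<Rightarrow> nat" where
  "swf p q j = (if j = p then q else if j = q then p else j)"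

lemma swf_inj: "inj_on (swf p q) X" unfolding swf_def inj_on_def by auto
lemma swf_bound: "p < T \<Longrightarrow> q < T \<Longrightarrow> j < T \<Longrightarrow> swf p q j < T" unfolding swf_def by auto
lemma swf_p[simp]: "swf p q p = q" unfolding swf_def by auto

definition horner :: "nat \<Rightarrow> nat list \<Rightarrow> nat" where
  "horner B vs = foldl (\<lambda>h v. h * B + v) 0 vs"

lemma horner_Nil[simp]: "horner B [] = 0" by (simp add: horner_def)
lemma horner_snoc[simp]: "horner B (vs @ [v]) = horner B vs * B + v" by (simp add: horner_def)

lemma horner_bound: "(\<forall>v\<in>set vs. v < B) \<Longrightarrow> horner B vs < B ^ length vs"
proof (induction vs rule: rev_induct)
  case Nil thus ?case by simp
next
  case (snoc v vs)
  hence h: "horner B vs < B ^ length vs" and vB: "v < B" by auto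
  have "horner B vs * B + v < horner B vs * B + B" using vB by simp
  also have "\<dots> = (horner B vs + 1) * B" by simp
  also have "\<dots> \<le> B ^ length vs * B" using h by (intro mult_le_mono1) simp
  finally show ?case by (simp add: mult.commute)
qed

lemma horner_digit: "(\<forall>v\<in>set vs. v < B) \<Longrightarrow> j < length vs \<Longrightarrow>
   (horner B vs div B ^ (length vs - Suc j)) mod B = vs ! j"
proof (induction vs arbitrary: j rule: rev_induct)
  case Nil thus ?case by simp
next
  case (snoc v vs)
  hence vB: "v < B" and all: "\<forall>v\<in>set vs. v < B" by auto
  hence B0: "B > 0" by auto
  show ?case
  proof (cases "j = length vs")
    case True thus ?thesis using vB by (simp add: nth_append)
  next
    case False
    hence j: "j < length vs" using snoc by simp
    have e: "length (vs @ [v]) - Suc j = Suc (length vs - Suc j)" using j by simp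
    have "horner B (vs @ [v]) div B ^ (length (vs @ [v]) - Suc j)
        = ((horner B vs * B + v) div B) div B ^ (length vs - Suc j)"
      unfolding e by (simp add: div_mult2_eq)
    also have "(horner B vs * B + v) div B = horner B vs" using vB B0 by simp
    finally show ?thesis using snoc.IH[OF all j] j by (simp add: nth_append)
  qed
qed

definition decode :: "nat \<Rightarrow> nat \<Rightarrow> nat \<Rightarrow> nat list" where
  "decode B K b = map (\<lambda>j. (b div B ^ (K - Suc j)) mod B) [0..<K]"

lemma decode_horner: "(\<forall>v\<in>set vs. v < B) \<Longrightarrow> length vs = K \<Longrightarrow> decode B K (horner B vs) = vs"
  unfolding decode_def by (auto intro!: nth_equalityI simp: horner_digit)



lemma pad_unit: "y < N \<Longrightarrow> pad k (unit_vec N y) = unit_vec (N * 2^k) (y * 2^k)"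
proof (rule eq_vecI)
  assume y: "y < N"
  fix n assume "n < dim_vec (unit_vec (N * 2^k) (y * 2^k) :: complex vec)"
  hence n: "n < N * 2^k" by simp
  have yk: "y * 2^k < N * 2^k" using y by simp
  have nd: "n div 2^k < N" using n by (simp add: less_mult_imp_div_less)
  show "pad k (unit_vec N y) $ n = unit_vec (N * 2^k) (y * 2^k) $ n"
  proof (cases "n mod 2^k = 0")
    case True
    hence ne: "n = (n div 2^k) * 2^k" using div_mult_mod_eq[of n "2^k"] by simp
    have "(n div 2^k = y) = (n = y * 2^k)"
    proof
      assume "n div 2^k = y" thus "n = y * 2^k" using ne by simp
    next
      assume "n = y * 2^k" thus "n div 2^k = y" by simp
    qed
    thus ?thesis using True n nd y yk by (simp add: pad_def)
  next
    case False
    hence "n \<noteq> y * 2^k" by auto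
    thus ?thesis using False n yk by (simp add: pad_def)
  qed
qed (simp add: pad_def)

lemma query_mat_perm: "query_mat Q f = perm_mat (2 ^ m_query Q) (query_perm Q f)"
  unfolding query_mat_def perm_mat_def ..

lemma qp_cong_pt:
  assumes "n div 2^(m - m1) \<in> Z \<Longrightarrow> g (\<tau> (n div 2^(m - m1))) = g' (\<tau> (n div 2^(m - m1)))"
  shows "query_perm (m, m1, m2, Z, \<tau>, \<beta>) g n = query_perm (m, m1, m2, Z, \<tau>, \<beta>) g' n"
  unfolding query_perm_def Let_def using assms by auto

lemma prod_map_inj:
  assumes g: "\<And>b. b \<in> Bs \<Longrightarrow> inj_on (g b) X \<and> g b ` X \<subseteq> X"
    and h: "inj_on h J" "h ` J \<subseteq> J" and k: "inj_on k Bs" "k ` Bs \<subseteq> Bs"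
  shows "inj_on (\<lambda>(x,j,b). (g b x, h j, k b)) (X \<times> J \<times> Bs)"
    and "(\<lambda>(x,j,b). (g b x, h j, k b)) ` (X \<times> J \<times> Bs) \<subseteq> X \<times> J \<times> Bs"
proof -
  show "inj_on (\<lambda>(x,j,b). (g b x, h j, k b)) (X \<times> J \<times> Bs)"
  proof (rule inj_onI)
    fix p q assume p: "p \<in> X \<times> J \<times> Bs" and q: "q \<in> X \<times> J \<times> Bs"
      and eq0: "(\<lambda>(x,j,b). (g b x, h j, k b)) p = (\<lambda>(x,j,b). (g b x, h j, k b)) q"
    obtain x j b where pe: "p = (x,j,b)" by (cases p) auto
    obtain x' j' b' where qe: "q = (x',j',b')" by (cases q) auto
    have in1: "x \<in> X" "j \<in> J" "b \<in> Bs" using p pe by auto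
    have in2: "x' \<in> X" "j' \<in> J" "b' \<in> Bs" using q qe by auto
    have eq: "g b x = g b' x'" "h j = h j'" "k b = k b'" using eq0 pe qe by auto
    have bb: "b = b'" using eq(3) k(1) in1 in2 by (auto dest: inj_onD)
    have jj: "j = j'" using eq(2) h(1) in1 in2 by (auto dest: inj_onD)
    have "x = x'" using eq(1) g[OF in1(3)] in1 in2 bb by (auto dest: inj_onD)
    thus "p = q" using bb jj pe qe by simp
  qed
  show "(\<lambda>(x,j,b). (g b x, h j, k b)) ` (X \<times> J \<times> Bs) \<subseteq> X \<times> J \<times> Bs"
    using g h k by auto
qed



lemma lin_bound: "(a::nat) < A \<Longrightarrow> b < B \<Longrightarrow> a * B + b < A * B"
proof -
  assume a: "a < A" and b: "b < B"
  have "a * B + b < a * B + B" using b by simp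
  also have "\<dots> = (a + 1) * B" by simp
  also have "\<dots> \<le> A * B" using a by (intro mult_le_mono1) simp
  finally show ?thesis .
qed

context
  fixes mt mt1 mt2 :: nat and Zt :: "nat set" and \<tau>t :: "nat \<Rightarrow> 'e" and \<beta>t :: "'l \<Rightarrow> nat"
    and kk ms :: nat and \<eta> :: "nat \<Rightarrow> 'e \<Rightarrow> 'd" and \<beta> :: "'k \<Rightarrow> nat"
    and \<rho> :: "'e \<Rightarrow> nat list \<Rightarrow> 'l"
  assumes kk1: "kk \<ge> 1" and ms1: "ms \<ge> 1" and mtt: "mt1 + mt2 \<le> mt"
begin

definition "MM = kk * ms"
definition "mm = mt + kk + MM"
definition "encS = (\<lambda>(x::nat, j::nat, b::nat). (x * 2^kk + j) * 2^MM + b)"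
definition "decS n = (n div 2^MM div 2^kk, n div 2^MM mod 2^kk, n mod 2^MM)"
definition "SS = {..<(2::nat)^mt} \<times> {..<(2::nat)^kk} \<times> {..<(2::nat)^MM}"

lemma MM_ge: "ms \<le> MM" "MM \<ge> 1" using kk1 ms1 by (auto simp: MM_def)

lemma P_eq: "(2::nat)^MM = (2^ms)^kk" unfolding MM_def by (metis power_mult mult.commute)
lemma A_eq: "(2::nat)^(MM - ms) = (2^ms)^(kk-1)"
proof -
  have "MM - ms = ms * (kk - 1)" unfolding MM_def using kk1 by (simp add: algebra_simps diff_mult_distrib2)
  thus ?thesis by (simp add: power_mult)
qed
lemma AB: "(2::nat)^(MM - ms) * 2^ms = 2^MM" using MM_ge by (simp flip: power_add)

lemma enc_bound: "s \<in> SS \<Longrightarrow> encS s < 2^mm"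
proof -
  assume "s \<in> SS"
  then obtain x j b where s: "s = (x,j,b)" "x < 2^mt" "j < 2^kk" "b < 2^MM" unfolding SS_def by auto
  have "x * 2^kk + j < 2^mt * 2^kk" using s lin_bound by blast
  hence "(x * 2^kk + j) * 2^MM + b < 2^mt * 2^kk * 2^MM" using s lin_bound by blast
  thus ?thesis using s unfolding encS_def mm_def by (simp add: power_add)
qed

lemma dec_enc: "s \<in> SS \<Longrightarrow> decS (encS s) = s"
proof -
  assume "s \<in> SS"
  then obtain x j b where s: "s = (x,j,b)" "x < 2^mt" "j < 2^kk" "b < 2^MM" unfolding SS_def by auto
  show ?thesis using s unfolding encS_def decS_def by simp
qed

lemma dec_bound: "n < 2^mm \<Longrightarrow> decS n \<in> SS"
proof -
  assume n: "n < 2^mm"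
  have "n div 2^MM div 2^kk < 2^mt"
    using n unfolding mm_def by (simp add: div_mult2_eq[symmetric] less_mult_imp_div_less power_add mult.commute mult.left_commute)
  thus ?thesis unfolding SS_def decS_def by simp
qed

lemma enc_dec: "encS (decS n) = n"
  unfolding encS_def decS_def by (simp, metis div_mult_mod_eq)

definition "itx x = x div 2^(mt - mt1)"
definition "Zq = {a. a < 2^(mt+kk) \<and> itx (a div 2^kk) \<in> Zt \<and> a mod 2^kk < kk}"
definition "\<tau>q a = \<eta> (a mod 2^kk) (\<tau>t (itx (a div 2^kk)))"
definition "Qq = (mm, mt+kk, MM, Zq, \<tau>q, \<beta>)"
definition "qa f = (\<lambda>(x::nat, j::nat, b::nat). (x, j, if itx x \<in> Zt \<and> j < kk then (b + \<beta> (f (\<eta> j (\<tau>t (itx x))))) mod 2^MM else b))"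

lemma q_enc: "s \<in> SS \<Longrightarrow> query_perm Qq f (encS s) = encS (qa f s)"
proof -
  assume "s \<in> SS"
  then obtain x j b where s: "s = (x,j,b)" "x < 2^mt" "j < 2^kk" "b < 2^MM" unfolding SS_def by auto
  have i: "encS s div 2^MM = x * 2^kk + j" using s unfolding encS_def by simp
  have b: "encS s mod 2^MM = b" using s unfolding encS_def by simp
  have ib: "x * 2^kk + j < 2^(mt+kk)" using s lin_bound[of x "2^mt" j "2^kk"] by (simp add: power_add)
  have iZ: "(x * 2^kk + j \<in> Zq) = (itx x \<in> Zt \<and> j < kk)" using ib s unfolding Zq_def by simp
  have t: "\<tau>q (x * 2^kk + j) = \<eta> j (\<tau>t (itx x))" using s unfolding \<tau>q_def by simp
  have mm1: "mm - (mt + kk) = MM" "mm - (mt + kk) - MM = 0" unfolding mm_def by auto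
  show ?thesis unfolding Qq_def query_perm_def Let_def prod.case mm1 i b
    using iZ t s by (auto simp: qa_def encS_def)
qed

definition "Gf t b x = (if t = kk then query_perm (mt, mt1, mt2, Zt, \<tau>t, \<beta>t) (\<lambda>s. \<rho> s (decode (2^ms) kk b)) x else x)"
definition "Hf t j = (if t = 0 \<or> t = kk then j else if t < kk then swf (t-1) t j else swf (2*kk-t) (2*kk-t-1) j)"
definition "Kf t b = (if t = 0 then b else if t < kk then rotf (2^(MM-ms)) (2^ms) b
   else if t = kk then negf (2^MM) b else negf (2^MM) (rotf (2^ms) (2^(MM-ms)) (negf (2^MM) b)))"
definition "\<phi> t = (\<lambda>(x,j,b). (Gf t b x, Hf t j, Kf t b))"
definition "\<sigma> t n = encS (\<phi> t (decS n))"

lemma kk_less: "kk < 2^kk" by (rule less_exp)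

lemma phi_inj: "t \<le> 2*kk \<Longrightarrow> inj_on (\<phi> t) SS \<and> \<phi> t ` SS \<subseteq> SS"
proof -
  assume t: "t \<le> 2*kk"
  have g: "inj_on (Gf t b) {..<2^mt} \<and> Gf t b ` {..<2^mt} \<subseteq> {..<2^mt}" for b
  proof (cases "t = kk")
    case True
    have "inj_on (query_perm (mt, mt1, mt2, Zt, \<tau>t, \<beta>t) (\<lambda>s. \<rho> s (decode (2^ms) kk b))) {..<2^mt}"
      by (rule qp_inj[OF mtt])
    moreover have "\<forall>n<2^mt. query_perm (mt, mt1, mt2, Zt, \<tau>t, \<beta>t) (\<lambda>s. \<rho> s (decode (2^ms) kk b)) n < 2^mt"
      using qp_bound[OF mtt] by blast
    ultimately show ?thesis unfolding Gf_def using True by (simp add: image_subset_iff)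
  qed (simp add: Gf_def inj_on_def)
  have h1: "inj_on (Hf t) {..<2^kk}"
  proof (cases "t = 0 \<or> t = kk")
    case True thus ?thesis by (simp add: Hf_def inj_on_def)
  next
    case c1: False
    show ?thesis
    proof (cases "t < kk")
      case True
      hence "Hf t = swf (t-1) t" using c1 by (simp add: Hf_def fun_eq_iff)
      thus ?thesis using swf_inj by metis
    next
      case False
      hence "Hf t = swf (2*kk-t) (2*kk-t-1)" using c1 by (simp add: Hf_def fun_eq_iff)
      thus ?thesis using swf_inj by metis
    qed
  qed
  have kl: "y \<le> kk \<Longrightarrow> y < 2^kk" for y using kk_less le_less_trans by blast
  have h2: "Hf t ` {..<2^kk} \<subseteq> {..<2^kk}" unfolding Hf_def using t
    by (auto simp: swf_def intro: kl)
  have A0: "(2::nat)^(MM-ms) > 0" "(2::nat)^ms > 0" by auto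
  have r1: "inj_on (rotf (2^(MM-ms)) (2^ms)) {..<2^MM}" using rotf_inj[OF A0] AB by simp
  have r2: "inj_on (rotf (2^ms) (2^(MM-ms))) {..<2^MM}" using rotf_inj[OF A0(2) A0(1)] AB by (simp add: mult.commute)
  have r1b: "b < 2^MM \<Longrightarrow> rotf (2^(MM-ms)) (2^ms) b < 2^MM" for b using rotf_bound[OF A0] AB by simp
  have r2b: "b < 2^MM \<Longrightarrow> rotf (2^ms) (2^(MM-ms)) b < 2^MM" for b using rotf_bound[OF A0(2) A0(1)] AB by (simp add: mult.commute)
  have nb: "negf (2^MM) b < 2^MM" for b using negf_bound by simp
  have ni: "negf (2^MM) a = negf (2^MM) b \<Longrightarrow> a < 2^MM \<Longrightarrow> b < 2^MM \<Longrightarrow> a = b" for a b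
    using negf_inj[of "2^MM"] by (auto dest: inj_onD)
  have ri: "rotf (2^ms) (2^(MM-ms)) a = rotf (2^ms) (2^(MM-ms)) b \<Longrightarrow> a < 2^MM \<Longrightarrow> b < 2^MM \<Longrightarrow> a = b" for a b
    using r2 by (auto dest: inj_onD)
  have k1: "inj_on (Kf t) {..<2^MM}"
  proof (rule inj_onI)
    fix a b assume a: "a \<in> {..<2^MM}" and b: "b \<in> {..<2^MM}" and e: "Kf t a = Kf t b"
    show "a = b"
    proof (cases "t = 0 \<or> t < kk \<or> t = kk")
      case True
      show ?thesis
      proof (cases "t = 0")
        case True thus ?thesis using e unfolding Kf_def by simp
      next
        case t0: False
        show ?thesis
        proof (cases "t < kk")
          case True
          hence "rotf (2^(MM-ms)) (2^ms) a = rotf (2^(MM-ms)) (2^ms) b" using e t0 unfolding Kf_def by simp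
          thus ?thesis using r1 a b by (auto dest: inj_onD)
        next
          case False
          hence "t = kk" using \<open>t = 0 \<or> t < kk \<or> t = kk\<close> t0 by simp
          hence "negf (2^MM) a = negf (2^MM) b" using e t0 unfolding Kf_def by simp
          thus ?thesis using ni a b by blast
        qed
      qed
    next
      case False
      hence "negf (2^MM) (rotf (2^ms) (2^(MM-ms)) (negf (2^MM) a)) = negf (2^MM) (rotf (2^ms) (2^(MM-ms)) (negf (2^MM) b))"
        using e unfolding Kf_def by auto
      hence "rotf (2^ms) (2^(MM-ms)) (negf (2^MM) a) = rotf (2^ms) (2^(MM-ms)) (negf (2^MM) b)"
        using ni r2b nb by blast
      hence "negf (2^MM) a = negf (2^MM) b" using ri nb by blast
      thus ?thesis using ni a b by blast
    qed
  qed
  have k2: "Kf t ` {..<2^MM} \<subseteq> {..<2^MM}" unfolding Kf_def using r1b nb by auto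
  show ?thesis unfolding \<phi>_def SS_def using prod_map_inj[of "{..<2^MM}" "Gf t" "{..<2^mt}" "Hf t" "{..<2^kk}" "Kf t", OF g h1 h2 k1 k2]
    by blast
qed

lemma sigma_ok: "t \<le> 2*kk \<Longrightarrow> inj_on (\<sigma> t) {..<2^mm} \<and> (\<forall>n<2^mm. \<sigma> t n < 2^mm)"
proof -
  assume t: "t \<le> 2*kk"
  note ph = phi_inj[OF t]
  have r: "\<sigma> t n < 2^mm" if "n < 2^mm" for n
    unfolding \<sigma>_def using ph dec_bound[OF that] by (intro enc_bound) blast
  have "inj_on (\<sigma> t) {..<2^mm}"
  proof (rule inj_onI)
    fix a b assume a: "a \<in> {..<2^mm}" and b: "b \<in> {..<2^mm}" and e: "\<sigma> t a = \<sigma> t b"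
    have da: "decS a \<in> SS" and db: "decS b \<in> SS" using a b dec_bound by auto
    have "\<phi> t (decS a) = \<phi> t (decS b)" using e unfolding \<sigma>_def
      by (metis dec_enc da db ph image_subset_iff)
    hence "decS a = decS b" using ph da db by (auto dest: inj_onD)
    thus "a = b" by (metis enc_dec)
  qed
  thus ?thesis using r by blast
qed

primrec Pt :: "('d \<Rightarrow> 'k) \<Rightarrow> nat \<Rightarrow> nat \<Rightarrow> nat" where
  "Pt f 0 = \<sigma> 0"
| "Pt f (Suc t) = \<sigma> (Suc t) \<circ> query_perm Qq f \<circ> Pt f t"

lemma Qq_bound: "n < 2^mm \<Longrightarrow> query_perm Qq f n < 2^mm"
  unfolding Qq_def by (rule qp_bound) (auto simp: mm_def)

lemma Pt_bound: "t \<le> 2*kk \<Longrightarrow> n < 2^mm \<Longrightarrow> Pt f t n < 2^mm"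
proof (induction t)
  case 0 thus ?case using sigma_ok[of 0] by simp
next
  case (Suc t)
  thus ?case using sigma_ok[of "Suc t"] Qq_bound by simp
qed

lemma query_mat_Qq: "query_mat Qq f = perm_mat (2^mm) (query_perm Qq f)"
  unfolding query_mat_perm by (simp add: m_query_def Qq_def)

lemma fold_eq: "t \<le> 2*kk \<Longrightarrow> foldl (\<lambda>A U. U * query_mat Qq f * A) (perm_mat (2^mm) (\<sigma> 0))
     (map (\<lambda>t. perm_mat (2^mm) (\<sigma> t)) [1..<Suc t]) = perm_mat (2^mm) (Pt f t)"
proof (induction t)
  case 0 thus ?case by simp
next
  case (Suc t)
  hence IH: "foldl (\<lambda>A U. U * query_mat Qq f * A) (perm_mat (2^mm) (\<sigma> 0))
     (map (\<lambda>t. perm_mat (2^mm) (\<sigma> t)) [1..<Suc t]) = perm_mat (2^mm) (Pt f t)" by simp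
  have m1: "perm_mat (2^mm) (\<sigma> (Suc t)) * perm_mat (2^mm) (query_perm Qq f) = perm_mat (2^mm) (\<sigma> (Suc t) \<circ> query_perm Qq f)"
    by (rule perm_mat_mult) (rule Qq_bound)
  have m2: "perm_mat (2^mm) (\<sigma> (Suc t) \<circ> query_perm Qq f) * perm_mat (2^mm) (Pt f t) = perm_mat (2^mm) (Pt f (Suc t))"
    using Suc.prems by (simp, intro perm_mat_mult Pt_bound, auto)
  have e: "[1..<Suc (Suc t)] = [1..<Suc t] @ [Suc t]" by simp
  show ?case unfolding e map_append foldl_append list.map foldl_Cons foldl_Nil IH
    unfolding query_mat_Qq by (simp only: m1 m2)
qed

definition "Bq = (Qq, map (\<lambda>t. perm_mat (2^mm) (\<sigma> t)) [0..<Suc (2*kk)])"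

lemma alg_eq: "alg_mat Bq f = perm_mat (2^mm) (Pt f (2*kk))"
proof -
  have u: "[0..<Suc (2*kk)] = 0 # [1..<Suc (2*kk)]" by (simp add: upt_rec)
  have sb: "snd Bq = perm_mat (2^mm) (\<sigma> 0) # map (\<lambda>t. perm_mat (2^mm) (\<sigma> t)) [1..<Suc (2*kk)]"
    unfolding Bq_def snd_conv u list.map ..
  have fb: "fst Bq = Qq" unfolding Bq_def by simp
  show ?thesis unfolding alg_mat_def sb fb list.sel using fold_eq[of "2*kk" f] by simp
qed

definition "vs f x = map (\<lambda>j. if itx x \<in> Zt then \<beta> (f (\<eta> j (\<tau>t (itx x)))) else 0) [0..<kk]"
definition "xp f x = query_perm (mt, mt1, mt2, Zt, \<tau>t, \<beta>t) (\<lambda>s. \<rho> s (vs f x)) x"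
definition "st f x t = (if t < kk then (x, t, horner (2^ms) (take t (vs f x)) * 2^ms)
   else (xp f x, kk - 1 - (t - kk), negf (2^MM) (horner (2^ms) (take (kk - (t - kk)) (vs f x)))))"

lemma qa_step: "j < kk \<Longrightarrow> itx y = itx x \<Longrightarrow> b < 2^MM \<Longrightarrow> qa f (y, j, b) = (y, j, (b + vs f x ! j) mod 2^MM)"
  unfolding qa_def vs_def by auto

lemma it_xp: "itx (xp f x) = itx x"
  unfolding itx_def xp_def by (rule qp_index[OF mtt])

lemma len_vs[simp]: "length (vs f x) = kk" unfolding vs_def by simp

context
  fixes f x
  assumes xb: "x < 2^mt" and hv: "\<forall>v\<in>set (vs f x). v < 2^ms"
begin

lemma hb: "t \<le> kk \<Longrightarrow> horner (2^ms) (take t (vs f x)) < (2^ms)^t"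
  using horner_bound[of "take t (vs f x)" "2^ms"] hv by (auto dest: in_set_takeD)

lemma Bpow: "t \<le> kk \<Longrightarrow> ((2::nat)^ms)^t \<le> 2^MM"
  unfolding P_eq by (rule power_increasing) auto

lemma Bpow1: "t \<le> kk - 1 \<Longrightarrow> ((2::nat)^ms)^t \<le> 2^(MM - ms)"
  unfolding A_eq by (rule power_increasing) auto

lemma st_S: "t \<le> 2*kk \<Longrightarrow> st f x t \<in> SS"
proof (cases "t < kk")
  case True
  have "horner (2^ms) (take t (vs f x)) * 2^ms < (2^ms)^t * 2^ms"
    using hb[of t] True by simp
  also have "\<dots> = (2^ms)^(Suc t)" by simp
  also have "\<dots> \<le> 2^MM" using Bpow[of "Suc t"] True by simp
  finally have hb2: "horner (2^ms) (take t (vs f x)) * 2^ms < 2^MM" .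
  have "t < 2^kk" using less_trans[OF True kk_less] .
  then show ?thesis unfolding st_def SS_def using True xb hb2 by auto
next
  case False
  have "kk - 1 - (t - kk) < 2^kk" using kk_less by linarith
  moreover have "xp f x < 2^mt" unfolding xp_def by (rule qp_bound[OF mtt xb])
  ultimately show ?thesis unfolding st_def SS_def using False negf_bound[of "2^MM"] by auto
qed

lemma qa_S: "s \<in> SS \<Longrightarrow> qa f s \<in> SS"
  unfolding SS_def qa_def by auto

lemma step: "t < 2*kk \<Longrightarrow> \<phi> (Suc t) (qa f (st f x t)) = st f x (Suc t)"
proof -
  assume t: "t < 2*kk"
  define B :: nat where "B = 2^ms"
  define P :: nat where "P = 2^MM"
  define A :: nat where "A = 2^(MM - ms)"
  define v where "v = vs f x"
  have B0: "B > 0" unfolding B_def by simp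
  show ?thesis
  proof (cases "Suc t < kk")
    case True
    define h' where "h' = horner B (take (Suc t) v)"
    have tk: "t < kk" using True by simp
    have hh: "horner B (take t v) * B + v ! t = h'"
      unfolding h'_def using tk by (simp add: take_Suc_conv_app_nth v_def)
    have h'b: "h' < B^(Suc t)" unfolding h'_def B_def v_def using hb[of "Suc t"] True by simp
    have h'P: "h' < P" using h'b Bpow[of "Suc t"] True unfolding P_def B_def by simp
    have "Suc t \<le> kk - 1" using True by simp
    hence h'A: "h' < A" using h'b Bpow1[of "Suc t"] unfolding A_def B_def by simp
    have "horner B (take t v) * B < P" using hh h'P by simp
    hence q: "qa f (st f x t) = (x, t, h')"
      using qa_step[OF tk, of x x] tk hh h'P unfolding st_def B_def[symmetric] P_def[symmetric] v_def[symmetric]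
      by (simp add: v_def)
    have "\<phi> (Suc t) (x, t, h') = (x, Suc t, h' * B)"
      using True h'A unfolding \<phi>_def Gf_def Hf_def Kf_def A_def[symmetric] B_def[symmetric]
      by (simp add: rotf_small)
    thus ?thesis using q True unfolding st_def h'_def B_def v_def by simp
  next
    case c2: False
    show ?thesis
    proof (cases "Suc t = kk")
      case True
      define h' where "h' = horner B v"
      have tk: "t < kk" using True by simp
      have t1: "take (Suc t) v = take t v @ [v!t]" using tk by (simp add: take_Suc_conv_app_nth v_def)
      have t2: "take (Suc t) v = v" using True by (simp add: v_def)
      have hh: "horner B (take t v) * B + v ! t = h'"
        unfolding h'_def using t1 t2 by (metis horner_snoc)
      have h'b: "h' < B^kk" unfolding h'_def B_def v_def using hb[of kk] by simp
      have h'P: "h' < P" using h'b Bpow[of kk] unfolding P_def B_def by simp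
      have "horner B (take t v) * B < P" using hh h'P by simp
      hence q: "qa f (st f x t) = (x, t, h')"
        using qa_step[OF tk, of x x] tk hh h'P unfolding st_def B_def[symmetric] P_def[symmetric] v_def[symmetric]
        by (simp add: v_def)
      have dec: "decode B kk h' = v" unfolding h'_def B_def v_def using hv by (simp add: decode_horner)
      have "\<phi> (Suc t) (x, t, h') = (xp f x, t, negf P h')"
        using True dec unfolding \<phi>_def Gf_def Hf_def Kf_def xp_def P_def[symmetric] B_def[symmetric] v_def by simp
      thus ?thesis using q True unfolding st_def h'_def B_def v_def P_def by simp
    next
      case False
      hence kt: "kk \<le> t" using c2 by simp
      define j where "j = kk - 1 - (t - kk)"
      have jk: "j < kk" and kj: "kk - (t - kk) = Suc j" using kt t kk1 unfolding j_def by auto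
      define h0 where "h0 = horner B (take j v)"
      define h1 where "h1 = horner B (take (Suc j) v)"
      have hh: "h0 * B + v ! j = h1"
        unfolding h0_def h1_def using jk by (simp add: take_Suc_conv_app_nth v_def)
      have h1P: "h1 < P" using hb[of "Suc j"] Bpow[of "Suc j"] jk unfolding h1_def P_def B_def v_def by simp
      have sti: "st f x t = (xp f x, j, negf P h1)"
        using kt unfolding st_def j_def[symmetric] kj h1_def B_def P_def v_def by simp
      have "qa f (st f x t) = (xp f x, j, (negf P h1 + v ! j) mod P)"
        unfolding sti using qa_step[OF jk it_xp, of "negf P h1"] negf_bound[of P]
        unfolding P_def v_def by simp
      also have "(negf P h1 + v ! j) mod P = negf P (h0 * B)"
      proof -
        have "h1 - v ! j = h0 * B" using hh by auto
        moreover have "v ! j \<le> h1" using hh by auto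
        ultimately show ?thesis using negf_add[OF h1P, of "v ! j"] by simp
      qed
      finally have q: "qa f (st f x t) = (xp f x, j, negf P (h0 * B))" .
      have nn: "negf P (negf P (h0 * B)) = h0 * B" using hh h1P by (intro negf_negf) simp
      have rr: "rotf B A (h0 * B) = h0" unfolding rotf_def using B0 by simp
      have hsw: "Hf (Suc t) j = kk - 1 - (Suc t - kk)"
      proof -
        have e1: "2*kk - Suc t = j" unfolding j_def using kt t by simp
        have "Hf (Suc t) j = swf j (j - 1) j" unfolding Hf_def using kt e1 by simp
        also have "\<dots> = j - 1" by simp
        finally show ?thesis unfolding j_def using kt by (simp add: Suc_diff_le)
      qed
      have "\<phi> (Suc t) (xp f x, j, negf P (h0 * B)) = (xp f x, kk - 1 - (Suc t - kk), negf P h0)"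
        using kt hsw nn rr unfolding \<phi>_def Gf_def Kf_def P_def[symmetric] A_def[symmetric] B_def[symmetric] by simp
      moreover have "kk - (Suc t - kk) = j" using kj kt by (simp add: Suc_diff_le)
      ultimately show ?thesis using q kt unfolding st_def h0_def B_def P_def v_def by simp
    qed
  qed
qed

lemma Pt_trace: "t \<le> 2*kk \<Longrightarrow> Pt f t (encS (x, 0, 0)) = encS (st f x t)"
proof (induction t)
  case 0
  have "(x, 0, 0) \<in> SS" using xb unfolding SS_def by simp
  hence "decS (encS (x, 0, 0)) = (x, 0, 0)" by (rule dec_enc)
  thus ?case using kk1 unfolding st_def by (simp add: \<sigma>_def \<phi>_def Gf_def Hf_def Kf_def)
next
  case (Suc t)
  hence IH: "Pt f t (encS (x, 0, 0)) = encS (st f x t)" by simp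
  have S1: "st f x t \<in> SS" using Suc.prems by (intro st_S) simp
  have "Pt f (Suc t) (encS (x, 0, 0)) = \<sigma> (Suc t) (encS (qa f (st f x t)))"
    using IH q_enc[OF S1] by simp
  also have "\<dots> = encS (\<phi> (Suc t) (qa f (st f x t)))"
    unfolding \<sigma>_def using dec_enc[OF qa_S[OF S1]] by simp
  also have "\<dots> = encS (st f x (Suc t))" using step Suc.prems by simp
  finally show ?case .
qed

lemma final: "Pt f (2*kk) (x * 2^(mm - mt)) = xp f x * 2^(mm - mt)"
proof -
  have e: "encS (y, 0, 0) = y * 2^(mm - mt)" for y unfolding encS_def mm_def by (simp add: power_add)
  have "st f x (2*kk) = (xp f x, 0, 0)" unfolding st_def using kk1 by simp
  thus ?thesis using Pt_trace[of "2*kk"] e by simp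
qed

end

lemma mm_pow: "(2::nat)^mt * 2^(mm - mt) = 2^mm" unfolding mm_def by (simp flip: power_add)

lemma main_ctx:
  fixes D :: "'d set" and K :: "'k set" and Dt :: "'e set" and Kt :: "'l set"
    and F :: "('d \<Rightarrow> 'k) set" and \<Gamma> :: "('d \<Rightarrow> 'k) \<Rightarrow> ('e \<Rightarrow> 'l)"
  assumes FD: "F \<subseteq> D \<rightarrow>\<^sub>E K"
    and eta: "\<forall>j < kk. \<eta> j \<in> Dt \<rightarrow> D"
    and bet: "\<beta> \<in> K \<rightarrow> {..<2 ^ ms}"
    and rel: "\<forall>f \<in> F. \<forall>s \<in> Dt. \<Gamma> f s = \<rho> s (map (\<lambda>j. \<beta> (f (\<eta> j s))) [0..<kk])"
    and qt: "is_query Dt Kt (mt, mt1, mt2, Zt, \<tau>t, \<beta>t)"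
  shows "\<exists>B. is_alg D K B \<and> n_q B = 2 * kk \<and> m_alg B > mt \<and>
    (\<forall>f \<in> F. \<forall>x < 2 ^ mt.
       pad (m_alg B - mt) (query_mat (mt, mt1, mt2, Zt, \<tau>t, \<beta>t) (\<Gamma> f) *\<^sub>v ket (2 ^ mt) x)
       = alg_mat B f *\<^sub>v pad (m_alg B - mt) (ket (2 ^ mt) x))"
proof (intro exI conjI ballI allI impI)
  have qt': "Zt \<noteq> {}" "Zt \<subseteq> {..<2^mt1}" "\<tau>t \<in> Zt \<rightarrow> Dt" "mt1 + mt2 \<le> mt"
    using qt unfolding is_query_def by auto
  have mB: "m_alg Bq = mm" unfolding m_alg_def Bq_def Qq_def m_query_def by simp
  show "m_alg Bq > mt" unfolding mB mm_def using MM_ge by simp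
  show "n_q Bq = 2 * kk" unfolding n_q_def Bq_def by simp
  have iq: "is_query D K Qq"
  proof -
    obtain i0 where i0: "i0 \<in> Zt" using qt'(1) by auto
    define a where "a = (i0 * 2^(mt - mt1)) * 2^kk"
    have i0b: "i0 < 2^mt1" using i0 qt'(2) by auto
    have "i0 * 2^(mt - mt1) < 2^mt1 * 2^(mt - mt1)" using i0b by simp
    also have "\<dots> = 2^mt" using qt'(4) by (simp flip: power_add)
    finally have "a < 2^mt * 2^kk" unfolding a_def by simp
    hence "a \<in> Zq" unfolding Zq_def a_def itx_def using i0 kk1 by (simp add: power_add)
    hence Zq0: "Zq \<noteq> {}" by auto
    have tq: "\<tau>q \<in> Zq \<rightarrow> D"
    proof
      fix a assume "a \<in> Zq"
      hence "itx (a div 2^kk) \<in> Zt" "a mod 2^kk < kk" unfolding Zq_def by auto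
      thus "\<tau>q a \<in> D" unfolding \<tau>q_def using eta qt'(3) by blast
    qed
    have bq: "\<beta> \<in> K \<rightarrow> {..<2^MM}"
    proof
      fix k assume "k \<in> K"
      hence "\<beta> k < 2^ms" using bet by auto
      also have "(2::nat)^ms \<le> 2^MM" using MM_ge by (intro power_increasing) auto
      finally show "\<beta> k \<in> {..<2^MM}" by simp
    qed
    show ?thesis unfolding is_query_def Qq_def using Zq0 tq bq MM_ge
      by (auto simp: mm_def Zq_def)
  qed
  show "is_alg D K Bq"
    unfolding is_alg_def
  proof (intro conjI ballI)
    show "is_query D K (fst Bq)" using iq unfolding Bq_def by simp
    show "snd Bq \<noteq> []" unfolding Bq_def by simp
    fix U assume "U \<in> set (snd Bq)"
    then obtain t where t: "t \<le> 2*kk" "U = perm_mat (2^mm) (\<sigma> t)" unfolding Bq_def by (auto simp del: upt_Suc simp: less_Suc_eq_le)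
    have "m_query (fst Bq) = mm" unfolding Bq_def Qq_def m_query_def by simp
    thus "unitary_mat (2 ^ m_query (fst Bq)) U" using t sigma_ok[OF t(1)] by (simp add: perm_mat_unitary)
  qed
  fix f and x :: nat assume f: "f \<in> F" and x: "x < 2^mt"
  have hv: "\<forall>v\<in>set (vs f x). v < 2^ms"
  proof
    fix v assume "v \<in> set (vs f x)"
    hence "v \<in> (\<lambda>j. if itx x \<in> Zt then \<beta> (f (\<eta> j (\<tau>t (itx x)))) else 0) ` {0..<kk}"
      unfolding vs_def set_map set_upt .
    then obtain j where j0: "j \<in> {0..<kk}" and jv: "v = (if itx x \<in> Zt then \<beta> (f (\<eta> j (\<tau>t (itx x)))) else 0)"
      by (rule imageE)
    have j: "j < kk" "v = (if itx x \<in> Zt then \<beta> (f (\<eta> j (\<tau>t (itx x)))) else 0)" using j0 jv by auto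
    show "v < 2^ms"
    proof (cases "itx x \<in> Zt")
      case True
      hence "\<tau>t (itx x) \<in> Dt" using qt'(3) by auto
      hence "\<eta> j (\<tau>t (itx x)) \<in> D" using eta j by auto
      hence "f (\<eta> j (\<tau>t (itx x))) \<in> K" using f FD by auto
      thus ?thesis using j bet True by auto
    qed (use j in simp)
  qed
  have qx: "query_perm (mt, mt1, mt2, Zt, \<tau>t, \<beta>t) (\<Gamma> f) x = xp f x"
    unfolding xp_def
  proof (rule qp_cong_pt)
    assume i: "x div 2^(mt - mt1) \<in> Zt"
    hence "\<tau>t (x div 2^(mt - mt1)) \<in> Dt" using qt'(3) by auto
    thus "\<Gamma> f (\<tau>t (x div 2 ^ (mt - mt1))) = \<rho> (\<tau>t (x div 2 ^ (mt - mt1))) (vs f x)"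
      using rel f i unfolding vs_def itx_def by auto
  qed
  have xpb: "xp f x < 2^mt" unfolding xp_def by (rule qp_bound[OF mtt x])
  have "pad (m_alg Bq - mt) (query_mat (mt, mt1, mt2, Zt, \<tau>t, \<beta>t) (\<Gamma> f) *\<^sub>v ket (2 ^ mt) x)
      = pad (mm - mt) (unit_vec (2^mt) (xp f x))"
    unfolding mB query_mat_perm ket_def using x qx xpb
    by (simp add: m_query_def perm_mat_vec qp_bound[OF mtt])
  also have "\<dots> = unit_vec (2^mm) (xp f x * 2^(mm - mt))"
    using pad_unit[OF xpb] mm_pow by simp
  also have "\<dots> = perm_mat (2^mm) (Pt f (2*kk)) *\<^sub>v unit_vec (2^mm) (x * 2^(mm - mt))"
  proof -
    have xb2: "x * 2^(mm - mt) < 2^mm" using x mm_pow by (metis mult_less_mono1 zero_less_power zero_less_numeral)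
    have "Pt f (2*kk) (x * 2^(mm - mt)) < 2^mm" using Pt_bound[OF _ xb2, of "2*kk" f] by simp
    from perm_mat_vec[of "x * 2^(mm - mt)" "2^mm" "Pt f (2*kk)", OF xb2 this]
    show ?thesis using final[OF x hv] by simp
  qed
  also have "\<dots> = alg_mat Bq f *\<^sub>v pad (m_alg Bq - mt) (ket (2 ^ mt) x)"
    unfolding alg_eq mB ket_def using pad_unit[OF x] mm_pow by simp
  finally show "pad (m_alg Bq - mt) (query_mat (mt, mt1, mt2, Zt, \<tau>t, \<beta>t) (\<Gamma> f) *\<^sub>v ket (2 ^ mt) x)
      = alg_mat Bq f *\<^sub>v pad (m_alg Bq - mt) (ket (2 ^ mt) x)" .
qed

end

theorem lemma1:
  fixes D :: "'d set" and K :: "'k set" and Dt :: "'e set" and Kt :: "'l set"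
    and F :: "('d \<Rightarrow> 'k) set" and Ft :: "('e \<Rightarrow> 'l) set"
    and \<Gamma> :: "('d \<Rightarrow> 'k) \<Rightarrow> ('e \<Rightarrow> 'l)"
    and \<kappa> mstar :: nat and \<eta> :: "nat \<Rightarrow> 'e \<Rightarrow> 'd" and \<beta> :: "'k \<Rightarrow> nat"
    and \<rho> :: "'e \<Rightarrow> nat list \<Rightarrow> 'l"
    and Qt :: "('e, 'l) qquery"
  assumes "D \<noteq> {}" and "K \<noteq> {}" and "Dt \<noteq> {}" and "Kt \<noteq> {}"
    and "F \<noteq> {}" and "F \<subseteq> D \<rightarrow>\<^sub>E K" and "Ft \<noteq> {}" and "Ft \<subseteq> Dt \<rightarrow>\<^sub>E Kt"
    and "\<Gamma> \<in> F \<rightarrow> Ft"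
    and "\<kappa> \<ge> 1" and "mstar \<ge> 1"
    and "\<forall>j < \<kappa>. \<eta> j \<in> Dt \<rightarrow> D"
    and "\<beta> \<in> K \<rightarrow> {..<2 ^ mstar}"
    and "\<forall>s \<in> Dt. \<forall>ys. length ys = \<kappa> \<and> set ys \<subseteq> {..<2 ^ mstar} \<longrightarrow> \<rho> s ys \<in> Kt"
    and "\<forall>f \<in> F. \<forall>s \<in> Dt. \<Gamma> f s = \<rho> s (map (\<lambda>j. \<beta> (f (\<eta> j s))) [0..<\<kappa>])"
    and "is_query Dt Kt Qt"
  shows "\<exists>B. is_alg D K B \<and> n_q B = 2 * \<kappa> \<and> m_alg B > m_query Qt \<and>
    (\<forall>f \<in> F. \<forall>x < 2 ^ m_query Qt.
       pad (m_alg B - m_query Qt) (query_mat Qt (\<Gamma> f) *\<^sub>v ket (2 ^ m_query Qt) x)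
       = alg_mat B f *\<^sub>v pad (m_alg B - m_query Qt) (ket (2 ^ m_query Qt) x))"
  proof -
  obtain mt mt1 mt2 Zt \<tau>t \<beta>t where Q: "Qt = (mt, mt1, mt2, Zt, \<tau>t, \<beta>t)"
    by (metis prod_cases6)
  have qt: "is_query Dt Kt (mt, mt1, mt2, Zt, \<tau>t, \<beta>t)" using assms(16) unfolding Q .
  have mtt: "mt1 + mt2 \<le> mt" using qt unfolding is_query_def by auto
  have "\<exists>B. is_alg D K B \<and> n_q B = 2 * \<kappa> \<and> m_alg B > mt \<and>
    (\<forall>f \<in> F. \<forall>x < 2 ^ mt.
       pad (m_alg B - mt) (query_mat (mt, mt1, mt2, Zt, \<tau>t, \<beta>t) (\<Gamma> f) *\<^sub>v ket (2 ^ mt) x)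
       = alg_mat B f *\<^sub>v pad (m_alg B - mt) (ket (2 ^ mt) x))"
    by (rule main_ctx[OF assms(10) assms(11) mtt assms(6) assms(12) assms(13) assms(15) qt])
  thus ?thesis unfolding Q m_query_def fst_conv .
qed

end
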